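(* The two-step nilpotent Lie algebra $N$ is decomposable if and only if there are bases $\hat X$ and $\hat I$ such that the generating hypergraph $G$ is not connected.
   Context: Let $N$ be a two-step nilpotent Lie algebra over the complex numbers with a set of $q$ generators $\hat X = \{ \mathbf{x}_1, \cdots, \mathbf{x}_q \}$, and with center $I$ having a basis $\hat I = \{ \mathbf{y}_1, \cdots, \mathbf{y}_p \}$. Let $X = \mathrm{Span}\, \hat X$, so that $N = X \oplus I$, and assume $q, p \ge 2$ (so $\dim N = q+p$). The generating hypergraph $G$ of $N$ (with respect to these bases) is the bipartite hypergraph with the two vertex sets $\hat X$ and $\hat I$, where, whenever $[\mathbf{x}_i, \mathbf{x}_j] = \sum_{k=1}^p \alpha_k \mathbf{y}_k$ with not all $\alpha_k$ zero, $G$ has the multi-vertex hyper-edge $(\mathbf{x}_i, \mathbf{x}_j; \mathbf{y}_k : \alpha_k \neq 0)$. It is assumed that each $\mathbf{y}_k$ lies in at least one three-vertex hyper-edge $(\mathbf{x}_i, \mathbf{x}_j, \mathbf{y}_k)$ (achievable by a linear change of basis of $I$). *)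

theory Defs
  imports Complex_Main
begin

definition lie_algebra :: "(complex \<Rightarrow> 'v::ab_group_add \<Rightarrow> 'v) \<Rightarrow> ('v \<Rightarrow> 'v \<Rightarrow> 'v) \<Rightarrow> bool" where
  "lie_algebra s br \<longleftrightarrow> vector_space s \<and>
     (\<forall>a b c. br (a + b) c = br a c + br b c) \<and>
     (\<forall>a b c. br a (b + c) = br a b + br a c) \<and>
     (\<forall>r a b. br (s r a) b = s r (br a b)) \<and>
     (\<forall>r a b. br a (s r b) = s r (br a b)) \<and>
     (\<forall>a. br a a = 0) \<and>
     (\<forall>a b c. br a (br b c) + br b (br c a) + br c (br a b) = 0)"

definition two_step_nilpotent :: "('v::ab_group_add \<Rightarrow> 'v \<Rightarrow> 'v) \<Rightarrow> bool" where
  "two_step_nilpotent br \<longleftrightarrow> (\<forall>a b c. br (br a b) c = 0) \<and> (\<exists>a b. br a b \<noteq> 0)"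

definition lie_center :: "('v::ab_group_add \<Rightarrow> 'v \<Rightarrow> 'v) \<Rightarrow> 'v set" where
  "lie_center br = {z. \<forall>a. br z a = 0}"

definition lie_ideal :: "(complex \<Rightarrow> 'v::ab_group_add \<Rightarrow> 'v) \<Rightarrow> ('v \<Rightarrow> 'v \<Rightarrow> 'v) \<Rightarrow> 'v set \<Rightarrow> bool" where
  "lie_ideal s br J \<longleftrightarrow> module.subspace s J \<and> (\<forall>a b. b \<in> J \<longrightarrow> br a b \<in> J)"

definition decomposable :: "(complex \<Rightarrow> 'v::ab_group_add \<Rightarrow> 'v) \<Rightarrow> ('v \<Rightarrow> 'v \<Rightarrow> 'v) \<Rightarrow> bool" where
  "decomposable s br \<longleftrightarrow> (\<exists>A B. lie_ideal s br A \<and> lie_ideal s br B \<and> A \<noteq> {0} \<and> B \<noteq> {0} \<and>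
      A \<inter> B = {0} \<and> {a + b | a b. a \<in> A \<and> b \<in> B} = UNIV)"

text \<open>x 0..x (q-1) together with y 0..y (p-1) form a basis of N (so X = span of the x's is a
  complement of I), and the y's form a basis of the center I.\<close>
definition adapted_bases :: "(complex \<Rightarrow> 'v::ab_group_add \<Rightarrow> 'v) \<Rightarrow> ('v \<Rightarrow> 'v \<Rightarrow> 'v) \<Rightarrow> nat \<Rightarrow> nat \<Rightarrow>
    (nat \<Rightarrow> 'v) \<Rightarrow> (nat \<Rightarrow> 'v) \<Rightarrow> bool" where
  "adapted_bases s br q p x y \<longleftrightarrow>
     inj_on x {..<q} \<and> inj_on y {..<p} \<and> x ` {..<q} \<inter> y ` {..<p} = {} \<and>
     \<not> module.dependent s (x ` {..<q} \<union> y ` {..<p}) \<and>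
     module.span s (x ` {..<q} \<union> y ` {..<p}) = UNIV \<and>
     module.span s (y ` {..<p}) = lie_center br"

definition bracket_coeff :: "(complex \<Rightarrow> 'v::ab_group_add \<Rightarrow> 'v) \<Rightarrow> ('v \<Rightarrow> 'v \<Rightarrow> 'v) \<Rightarrow> nat \<Rightarrow>
    (nat \<Rightarrow> 'v) \<Rightarrow> (nat \<Rightarrow> 'v) \<Rightarrow> nat \<Rightarrow> nat \<Rightarrow> nat \<Rightarrow> complex" where
  "bracket_coeff s br p x y i j k = module.representation s (y ` {..<p}) (br (x i) (x j)) (y k)"

text \<open>Generating hypergraph: vertices Inl i (for x_i) and Inr k (for y_k).\<close>
definition gen_vertices :: "nat \<Rightarrow> nat \<Rightarrow> (nat + nat) set" where
  "gen_vertices q p = Inl ` {..<q} \<union> Inr ` {..<p}"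

definition gen_hyperedges :: "(complex \<Rightarrow> 'v::ab_group_add \<Rightarrow> 'v) \<Rightarrow> ('v \<Rightarrow> 'v \<Rightarrow> 'v) \<Rightarrow> nat \<Rightarrow> nat \<Rightarrow>
    (nat \<Rightarrow> 'v) \<Rightarrow> (nat \<Rightarrow> 'v) \<Rightarrow> (nat + nat) set set" where
  "gen_hyperedges s br q p x y =
     {{Inl i, Inl j} \<union> Inr ` {k. k < p \<and> bracket_coeff s br p x y i j k \<noteq> 0} | i j.
        i < q \<and> j < q \<and> (\<exists>k<p. bracket_coeff s br p x y i j k \<noteq> 0)}"

definition hypergraph_connected :: "'a set \<Rightarrow> 'a set set \<Rightarrow> bool" where
  "hypergraph_connected V E \<longleftrightarrow>
     (\<forall>u\<in>V. \<forall>w\<in>V. (u, w) \<in> {(a, b). \<exists>e\<in>E. a \<in> e \<and> b \<in> e}\<^sup>*)"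

text \<open>Standing assumption: every y_k lies in a three-vertex hyperedge (x_i, x_j, y_k).\<close>
definition three_vertex_condition :: "(complex \<Rightarrow> 'v::ab_group_add \<Rightarrow> 'v) \<Rightarrow> ('v \<Rightarrow> 'v \<Rightarrow> 'v) \<Rightarrow> nat \<Rightarrow> nat \<Rightarrow>
    (nat \<Rightarrow> 'v) \<Rightarrow> (nat \<Rightarrow> 'v) \<Rightarrow> bool" where
  "three_vertex_condition s br q p x y \<longleftrightarrow>
     (\<forall>k<p. \<exists>i<q. \<exists>j<q. {k'. k' < p \<and> bracket_coeff s br p x y i j k' \<noteq> 0} = {k})"

end

theory Submission
  imports Defs
begin

definition vf :: "(nat \<Rightarrow> 'v) \<Rightarrow> (nat \<Rightarrow> 'v) \<Rightarrow> nat + nat \<Rightarrow> 'v" where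
  "vf x y v = (case v of Inl i \<Rightarrow> x i | Inr k \<Rightarrow> y k)"

lemma vf_simps[simp]: "vf x y (Inl i) = x i" "vf x y (Inr k) = y k"
  by (simp_all add: vf_def)

locale twostep = finite_dimensional_vector_space scale Basis
  for scale :: "complex \<Rightarrow> 'v::ab_group_add \<Rightarrow> 'v" (infixr \<open>*s\<close> 75) and Basis +
  fixes br :: "'v \<Rightarrow> 'v \<Rightarrow> 'v"
  assumes addl: "br (a + b) c = br a c + br b c"
    and addr: "br a (b + c) = br a b + br a c"
    and scl: "br (r *s a) b = r *s (br a b)"
    and scr: "br a (r *s b) = r *s (br a b)"
    and alt: "br a a = 0"
    and nil: "br (br a b) c = 0"
begin

lemma br0l[simp]: "br 0 b = 0"
  using addl[of 0 0 b] by simp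
lemma br0r[simp]: "br a 0 = 0"
  using addr[of a 0 0] by simp
lemma anti: "br a b = - br b a"
proof -
  have "0 = br a (a+b) + br b (a+b)" using alt[of "a+b"] addl[of a b "a+b"] by simp
  also have "\<dots> = br a b + br b a" by (simp add: addr alt)
  finally show ?thesis by (metis eq_neg_iff_add_eq_0)
qed

lemma bil_span:
  assumes U: "subspace U" and h: "\<And>u v. u \<in> S \<Longrightarrow> v \<in> T \<Longrightarrow> br u v \<in> U"
    and a: "a \<in> span S" and b: "b \<in> span T"
  shows "br a b \<in> U"
proof -
  have "\<forall>b\<in>span T. br a b \<in> U" using a
  proof (induction rule: span_induct_alt)
    case base then show ?case using U by (simp add: subspace_0)
  next
    case (step c x y)
    show ?case
    proof
      fix b assume b: "b \<in> span T"
      have "br x b \<in> U" using b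
      proof (induction rule: span_induct_alt)
        case base then show ?case using U by (simp add: subspace_0)
      next
        case (step c' v w)
        then show ?case using h[OF \<open>x \<in> S\<close>] U
          by (simp add: addr scr subspace_add subspace_scale)
      qed
      then show "br (c *s x + y) b \<in> U" using step b U
        by (simp add: addl scl subspace_add subspace_scale)
    qed
  qed
  then show ?thesis using b by blast
qed

lemma center_brl: "z \<in> lie_center br \<Longrightarrow> br z a = 0"
  by (simp add: lie_center_def)
lemma center_brr: "z \<in> lie_center br \<Longrightarrow> br a z = 0"
  by (metis anti center_brl neg_equal_0_iff_equal)
lemma br_center: "br a b \<in> lie_center br"
  by (simp add: lie_center_def nil)

lemma span_disj_Int:
  assumes "independent (S \<union> T)" "S \<inter> T = {}" "z \<in> span S" "z \<in> span T"
  shows "z = 0"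
proof -
  have r1: "representation (S \<union> T) z = representation S z"
    using assms by (intro representation_extend) auto
  have r2: "representation (S \<union> T) z = representation T z"
    using assms by (intro representation_extend) auto
  have "\<And>b. representation (S \<union> T) z b = 0"
    using r1 r2 representation_ne_zero[of S z] representation_ne_zero[of T z] assms(2)
    by (metis disjoint_iff)
  then have "{b. representation (S \<union> T) z b \<noteq> 0} = {}" by auto
  moreover have "z \<in> span (S \<union> T)" using assms(3) span_mono[of S "S \<union> T"] by auto
  ultimately show ?thesis
    using sum_nonzero_representation_eq[OF assms(1)] by (metis sum.empty)
qed


lemma backward:
  assumes ab: "adapted_bases scale br q p x y"
    and nc: "\<not> hypergraph_connected (gen_vertices q p) (gen_hyperedges scale br q p x y)"
  shows "decomposable scale br"
proof -
  define V where "V = gen_vertices q p"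
  define E where "E = gen_hyperedges scale br q p x y"
  define R where "R = {(a, b). \<exists>e\<in>E. a \<in> e \<and> b \<in> e}"
  define Y0 where "Y0 = y ` {..<p}"
  define X0 where "X0 = x ` {..<q}"
  define f where "f = vf x y"
  obtain u0 w0 where u0: "u0 \<in> V" and w0: "w0 \<in> V" and nr: "(u0, w0) \<notin> R\<^sup>*"
    using nc unfolding hypergraph_connected_def V_def E_def R_def by blast
  have injx: "inj_on x {..<q}" and injy: "inj_on y {..<p}" and disj: "X0 \<inter> Y0 = {}"
    and ind: "independent (X0 \<union> Y0)" and spU: "span (X0 \<union> Y0) = UNIV"
    and spY: "span Y0 = lie_center br"
    using ab unfolding adapted_bases_def X0_def Y0_def by auto
  have indY: "independent Y0" using ind by (rule independent_mono) auto
  have fV: "f ` V = X0 \<union> Y0"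
    unfolding f_def V_def gen_vertices_def X0_def Y0_def by (simp add: image_Un image_image)
  have injf: "inj_on f V"
  proof (rule inj_onI)
    fix a b assume a: "a \<in> V" and b: "b \<in> V" and eq: "f a = f b"
    show "a = b"
    proof (cases a)
      case (Inl i) note ai = this
      show ?thesis
      proof (cases b)
        case (Inl j) then show ?thesis using ai a b eq injx
          by (auto simp: f_def V_def gen_vertices_def inj_on_def)
      next
        case (Inr k) then show ?thesis using ai a b eq disj
          by (auto simp: f_def V_def gen_vertices_def X0_def Y0_def)
      qed
    next
      case (Inr i) note ai = this
      show ?thesis
      proof (cases b)
        case (Inl j) then show ?thesis using ai a b eq disj
          by (auto simp: f_def V_def gen_vertices_def X0_def Y0_def)
      next
        case (Inr k) then show ?thesis using ai a b eq injy
          by (auto simp: f_def V_def gen_vertices_def inj_on_def)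
      qed
    qed
  qed
  have EV: "e \<subseteq> V" if "e \<in> E" for e
    using that unfolding E_def V_def gen_hyperedges_def gen_vertices_def by auto
  have RV: "a \<in> V \<and> b \<in> V" if "(a, b) \<in> R" for a b
    using that EV unfolding R_def by auto
  have Rsym: "(b, a) \<in> R" if "(a, b) \<in> R" for a b
    using that unfolding R_def by auto
  have key: "br (f v) (f w) \<in> span (f ` K)"
    if K: "K \<subseteq> V" and cl: "\<And>a b. a \<in> K \<Longrightarrow> (a, b) \<in> R \<Longrightarrow> b \<in> K"
      and v: "v \<in> V" and w: "w \<in> K" for K v w
  proof (cases w)
    case (Inr k)
    then have "f w \<in> lie_center br" using w K spY span_base[of "y k" Y0]
      by (auto simp: f_def V_def gen_vertices_def Y0_def)
    then show ?thesis using center_brr span_zero by simp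
  next
    case (Inl j) note wj = this
    show ?thesis
    proof (cases v)
      case (Inr k)
      then have "f v \<in> lie_center br" using v spY span_base[of "y k" Y0]
        by (auto simp: f_def V_def gen_vertices_def Y0_def)
      then show ?thesis using center_brl span_zero by simp
    next
      case (Inl i)
      have i: "i < q" using v Inl by (auto simp: V_def gen_vertices_def)
      have j: "j < q" using w K wj by (auto simp: V_def gen_vertices_def)
      define c where "c = br (x i) (x j)"
      define r where "r = representation Y0 c"
      have cZ: "c \<in> span Y0" using spY br_center c_def by simp
      have fY: "finite Y0" by (simp add: Y0_def)
      have csum: "(\<Sum>b\<in>Y0. r b *s b) = c"
        unfolding r_def by (rule sum_representation_eq[OF indY cZ fY subset_refl])
      have "(\<Sum>b\<in>Y0. r b *s b) \<in> span (f ` K)"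
      proof (rule span_sum)
        fix b assume b: "b \<in> Y0"
        show "r b *s b \<in> span (f ` K)"
        proof (cases "r b = 0")
          case True then show ?thesis by (simp add: span_zero)
        next
          case False
          obtain k where k: "k < p" and bk: "b = y k" using b by (auto simp: Y0_def)
          have bc: "bracket_coeff scale br p x y i j k \<noteq> 0"
            using False bk by (simp add: bracket_coeff_def r_def c_def Y0_def)
          define e where "e = {Inl i, Inl j} \<union> Inr ` {k. k < p \<and> bracket_coeff scale br p x y i j k \<noteq> 0}"
          have "e \<in> E" unfolding E_def gen_hyperedges_def e_def using i j k bc by blast
          moreover have "Inl j \<in> e" "Inr k \<in> e" using k bc by (auto simp: e_def)
          ultimately have "(w, Inr k) \<in> R" using wj by (auto simp: R_def)
          then have "Inr k \<in> K" using cl w by blast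
          then have "b \<in> f ` K" by (rule rev_image_eqI) (simp add: bk f_def)
          then show ?thesis by (intro span_scale span_base)
        qed
      qed
      then show ?thesis using csum Inl wj by (simp add: f_def c_def)
    qed
  qed
  define K where "K = {v \<in> V. (u0, v) \<in> R\<^sup>*}"
  have K1: "K \<subseteq> V" "\<And>a b. a \<in> K \<Longrightarrow> (a, b) \<in> R \<Longrightarrow> b \<in> K"
    unfolding K_def using RV by (auto intro: rtrancl_into_rtrancl)
  have K2: "V - K \<subseteq> V" "\<And>a b. a \<in> V - K \<Longrightarrow> (a, b) \<in> R \<Longrightarrow> b \<in> V - K"
  proof -
    show "V - K \<subseteq> V" by auto
    fix a b assume a: "a \<in> V - K" and ab: "(a, b) \<in> R"
    have "b \<in> V" using RV ab by blast
    moreover have "b \<notin> K"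
    proof
      assume "b \<in> K"
      then have "a \<in> K" using K1(2) Rsym[OF ab] by blast
      then show False using a by blast
    qed
    ultimately show "b \<in> V - K" by blast
  qed
  have u0K: "u0 \<in> K" using u0 by (simp add: K_def)
  have w0K: "w0 \<in> V - K" using w0 nr by (simp add: K_def)
  have ideal: "lie_ideal scale br (span (f ` K'))"
    if h1: "K' \<subseteq> V" and h2: "\<And>a b. a \<in> K' \<Longrightarrow> (a, b) \<in> R \<Longrightarrow> b \<in> K'" for K'
    unfolding lie_ideal_def
  proof (intro conjI allI impI subspace_span)
    fix a b assume b: "b \<in> span (f ` K')"
    have a: "a \<in> span (f ` V)" using fV spU by simp
    show "br a b \<in> span (f ` K')"
      by (rule bil_span[OF subspace_span _ a b]) (use key[OF h1 h2] h1 in auto)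
  qed
  have nz: "f v \<noteq> 0" if "v \<in> V" for v
  proof
    assume "f v = 0"
    moreover have "f v \<in> X0 \<union> Y0" using that fV by blast
    ultimately have "dependent (X0 \<union> Y0)" using dependent_zero by metis
    then show False using ind by blast
  qed
  have sp_ne: "span (f ` K') \<noteq> {0}" if "v \<in> K'" "K' \<subseteq> V" for K' v
  proof
    assume h: "span (f ` K') = {0}"
    have "f v \<in> span (f ` K')" using that(1) by (intro span_base imageI)
    then have "f v = 0" using h by simp
    then show False using nz that by blast
  qed
  have dis: "f ` K \<inter> f ` (V - K) = {}"
    using inj_on_image_Int[OF injf K1(1) K2(1)] by auto
  have "K \<union> (V - K) = V" using K1(1) by blast
  then have un: "f ` K \<union> f ` (V - K) = X0 \<union> Y0"
    using fV by (metis image_Un)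
  have indKB: "independent (f ` K \<union> f ` (V - K))" using ind un by simp
  show ?thesis unfolding decomposable_def
  proof (intro exI conjI)
    show "lie_ideal scale br (span (f ` K))" by (rule ideal[OF K1])
    show "lie_ideal scale br (span (f ` (V - K)))" by (rule ideal[OF K2])
    show "span (f ` K) \<noteq> {0}" by (rule sp_ne[OF u0K K1(1)])
    show "span (f ` (V - K)) \<noteq> {0}" by (rule sp_ne[OF w0K K2(1)])
    show "span (f ` K) \<inter> span (f ` (V - K)) = {0}"
    proof
      show "span (f ` K) \<inter> span (f ` (V - K)) \<subseteq> {0}"
        using span_disj_Int[OF indKB dis] by blast
      show "{0} \<subseteq> span (f ` K) \<inter> span (f ` (V - K))"
        using span_zero by blast
    qed
    show "{a + b |a b. a \<in> span (f ` K) \<and> b \<in> span (f ` (V - K))} = UNIV"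
      using span_Un[of "f ` K" "f ` (V - K)"] un spU by simp
  qed
qed


lemma subspace_center: "subspace (lie_center br)"
  unfolding subspace_def lie_center_def by (simp add: addl scl)

lemma ideal_subspace: "lie_ideal scale br A \<Longrightarrow> subspace A"
  by (simp add: lie_ideal_def)

lemma ideal_l: assumes "lie_ideal scale br A" "a \<in> A" shows "br a b \<in> A"
proof -
  have "br b a \<in> A" using assms unfolding lie_ideal_def by blast
  then have "- br b a \<in> A" using assms unfolding lie_ideal_def using subspace_neg by blast
  then show ?thesis using anti[of a b] by simp
qed

lemma ideal_r: "lie_ideal scale br A \<Longrightarrow> b \<in> A \<Longrightarrow> br a b \<in> A"
  unfolding lie_ideal_def by blast

lemma cross:
  assumes "lie_ideal scale br A" "lie_ideal scale br B" "A \<inter> B = {0}" "a \<in> A" "b \<in> B"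
  shows "br a b = 0"
proof -
  have "br a b \<in> A \<inter> B" using ideal_l[OF assms(1) assms(4)] ideal_r[OF assms(2) assms(5)] by simp
  then show ?thesis using assms(3) by simp
qed

lemma zsplit:
  assumes A: "lie_ideal scale br A" and B: "lie_ideal scale br B" and AB: "A \<inter> B = {0}"
    and dec: "\<And>v. \<exists>a\<in>A. \<exists>b\<in>B. v = a + b"
    and z: "z \<in> lie_center br" and zab: "z = a + b" and a: "a \<in> A" and b: "b \<in> B"
  shows "a \<in> lie_center br"
  unfolding lie_center_def
proof (intro CollectI allI)
  fix c
  obtain c1 c2 where c1: "c1 \<in> A" and c2: "c2 \<in> B" and cc: "c = c1 + c2" using dec by blast
  have BA: "B \<inter> A = {0}" using AB by blast
  have "br a c2 = 0" by (rule cross[OF A B AB a c2])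
  then have ac: "br a c = br a c1" by (simp add: cc addr)
  have "br b c1 = 0" by (rule cross[OF B A BA b c1])
  then have bc: "br b c = br b c2" by (simp add: cc addr)
  have "0 = br z c" using z center_brl by simp
  also have "\<dots> = br a c1 + br b c2" by (simp add: zab addl ac bc)
  finally have eq: "br a c1 = - br b c2" by (metis eq_neg_iff_add_eq_0)
  have "br a c1 \<in> A" by (rule ideal_l[OF A a])
  moreover have "- br b c2 \<in> B" using ideal_l[OF B b] ideal_subspace[OF B] subspace_neg by blast
  ultimately have "br a c1 \<in> A \<inter> B" using eq by simp
  then have "br a c1 = 0" using AB by simp
  then show "br a c = 0" using ac by simp
qed

lemma side:
  assumes A: "lie_ideal scale br A" and B: "lie_ideal scale br B" and AB: "A \<inter> B = {0}"
    and dec: "\<And>v. \<exists>a\<in>A. \<exists>b\<in>B. v = a + b"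
    and ZBr: "lie_center br \<subseteq> span {br a b | a b. True}"
    and Ane: "A \<noteq> {0}"
  obtains XA YA where "XA \<subseteq> A" "YA \<subseteq> lie_center br \<inter> A" "XA \<inter> lie_center br = {}" "XA \<noteq> {}"
    "A \<subseteq> span (XA \<union> YA)" "lie_center br \<inter> A \<subseteq> span YA" "independent YA"
    "\<And>y. y \<in> YA \<Longrightarrow> \<exists>u\<in>XA. \<exists>v\<in>XA. y = br u v"
    "finite XA" "finite YA" "card XA + card YA = dim A"
proof -
  define Z where "Z = lie_center br"
  have subA: "subspace A" by (rule ideal_subspace[OF A])
  have subB: "subspace B" by (rule ideal_subspace[OF B])
  have subZ: "subspace Z" unfolding Z_def by (rule subspace_center)
  have BA: "B \<inter> A = {0}" using AB by blast
  define PA where "PA = {br a b | a b. a \<in> A \<and> b \<in> A}"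
  define PB where "PB = {br a b | a b. a \<in> B \<and> b \<in> B}"
  have PAA: "PA \<subseteq> A" unfolding PA_def using ideal_r[OF A] by blast
  have PBB: "PB \<subseteq> B" unfolding PB_def using ideal_r[OF B] by blast
  have Brsub: "{br a b | a b. True} \<subseteq> span (PA \<union> PB)"
  proof clarify
    fix a b
    obtain a1 a2 where a1: "a1 \<in> A" and a2: "a2 \<in> B" and aa: "a = a1 + a2" using dec by blast
    obtain b1 b2 where b1: "b1 \<in> A" and b2: "b2 \<in> B" and bb: "b = b1 + b2" using dec by blast
    have "br a1 b2 = 0" by (rule cross[OF A B AB a1 b2])
    moreover have "br a2 b1 = 0" by (rule cross[OF B A BA a2 b1])
    ultimately have eq: "br a b = br a1 b1 + br a2 b2" by (simp add: aa bb addl addr)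
    have "br a1 b1 \<in> span (PA \<union> PB)" using a1 b1 by (intro span_base) (auto simp: PA_def)
    moreover have "br a2 b2 \<in> span (PA \<union> PB)" using a2 b2 by (intro span_base) (auto simp: PB_def)
    ultimately show "br a b \<in> span (PA \<union> PB)" unfolding eq by (rule span_add)
  qed
  have ZPAB: "Z \<subseteq> span (PA \<union> PB)"
    using ZBr span_minimal[OF Brsub subspace_span] unfolding Z_def by blast
  have spPA: "span PA \<subseteq> A" by (rule span_minimal[OF PAA subA])
  have spPB: "span PB \<subseteq> B" by (rule span_minimal[OF PBB subB])
  have ZA: "Z \<inter> A \<subseteq> span PA"
  proof
    fix z assume z: "z \<in> Z \<inter> A"
    then have "z \<in> span (PA \<union> PB)" using ZPAB by blast
    then obtain \<alpha> \<beta> where al: "\<alpha> \<in> span PA" and be: "\<beta> \<in> span PB" and zab: "z = \<alpha> + \<beta>"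
      unfolding span_Un by blast
    have "\<beta> = z - \<alpha>" using zab by simp
    moreover have "z - \<alpha> \<in> A" using z al spPA subA subspace_diff by blast
    ultimately have "\<beta> \<in> A \<inter> B" using be spPB by blast
    then have "\<beta> = 0" using AB by blast
    then show "z \<in> span PA" using zab al by simp
  qed
  obtain WA where WA1: "WA \<subseteq> Z \<inter> A" and WA2: "independent WA" and WA3: "Z \<inter> A \<subseteq> span WA"
    by (rule maximal_independent_subset)
  obtain BA where BA1: "WA \<subseteq> BA" and BA2: "BA \<subseteq> A" and BA3: "independent BA" and BA4: "A \<subseteq> span BA"
    using maximal_independent_subset_extend[of WA A] WA1 WA2 by blast
  define XA where "XA = BA - WA"
  define PX where "PX = {br u v | u v. u \<in> XA \<and> v \<in> XA}"
  have hBA: "br u v \<in> span PX" if u: "u \<in> BA" and v: "v \<in> BA" for u v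
  proof (cases "u \<in> WA")
    case True
    then have "u \<in> lie_center br" using WA1 unfolding Z_def by blast
    then show ?thesis using center_brl span_zero by simp
  next
    case False
    show ?thesis
    proof (cases "v \<in> WA")
      case True
      then have "v \<in> lie_center br" using WA1 unfolding Z_def by blast
      then show ?thesis using center_brr span_zero by simp
    next
      case False
      then have "br u v \<in> PX" using \<open>u \<notin> WA\<close> u v unfolding PX_def XA_def by blast
      then show ?thesis by (rule span_base)
    qed
  qed
  have PAX: "PA \<subseteq> span PX"
    unfolding PA_def
  proof clarify
    fix a b assume a: "a \<in> A" and b: "b \<in> A"
    have a': "a \<in> span BA" and b': "b \<in> span BA" using a b BA4 by auto
    show "br a b \<in> span PX"
      by (rule bil_span[where U="span PX" and S=BA and T=BA]) (simp_all add: hBA a' b')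
  qed
  have ZAX: "Z \<inter> A \<subseteq> span PX"
    using ZA span_minimal[OF PAX subspace_span] by blast
  have XAA: "XA \<subseteq> A" using BA2 XA_def by blast
  have PXZA: "PX \<subseteq> Z \<inter> A"
    unfolding PX_def Z_def using br_center ideal_r[OF A] XAA by blast
  obtain YA where YA1: "YA \<subseteq> PX" and YA2: "independent YA" and YA3: "PX \<subseteq> span YA"
    by (rule maximal_independent_subset)
  have ZAY: "Z \<inter> A \<subseteq> span YA"
    using ZAX span_minimal[OF YA3 subspace_span] by blast
  have XZ: "XA \<inter> Z = {}"
  proof (rule ccontr)
    assume "XA \<inter> Z \<noteq> {}"
    then obtain v where v: "v \<in> XA" "v \<in> Z" by blast
    then have "v \<in> span WA" using WA3 XAA by blast
    moreover have "WA \<subseteq> BA - {v}" using BA1 v(1) XA_def by blast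
    ultimately have "v \<in> span (BA - {v})" using span_mono by blast
    moreover have "v \<in> BA" using v XA_def by blast
    ultimately have "dependent BA" unfolding dependent_def by blast
    then show False using BA3 by blast
  qed
  have XAne: "XA \<noteq> {}"
  proof
    assume "XA = {}"
    then have "BA \<subseteq> Z" using BA1 WA1 XA_def by blast
    then have AZ: "A \<subseteq> Z" using BA4 span_minimal[OF _ subZ, of BA] by blast
    have AZ': "A \<subseteq> lie_center br" using AZ unfolding Z_def .
    have "PA \<subseteq> {0}"
    proof
      fix w assume "w \<in> PA"
      then obtain a b where "a \<in> A" and w: "w = br a b" unfolding PA_def by blast
      then have "a \<in> lie_center br" using AZ' by blast
      then show "w \<in> {0}" using w center_brl by simp
    qed
    then have "PA \<union> PB \<subseteq> B" using PBB subspace_0[OF subB] by blast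
    then have "span (PA \<union> PB) \<subseteq> B" by (rule span_minimal[OF _ subB])
    then have "A \<subseteq> B" using AZ ZPAB by blast
    then have "A \<subseteq> {0}" using AB by blast
    then show False using Ane subspace_0[OF subA] by blast
  qed
  have BAsp: "BA \<subseteq> span (XA \<union> YA)"
  proof
    fix v assume v: "v \<in> BA"
    show "v \<in> span (XA \<union> YA)"
    proof (cases "v \<in> WA")
      case True
      then have "v \<in> span YA" using WA1 ZAY by blast
      then show ?thesis using span_mono[of YA "XA \<union> YA"] by blast
    next
      case False
      then show ?thesis using v XA_def span_base[of v "XA \<union> YA"] by blast
    qed
  qed
  have Asp: "A \<subseteq> span (XA \<union> YA)"
    using BA4 span_minimal[OF BAsp subspace_span] by blast
  have finBA: "finite BA" by (rule finiteI_independent[OF BA3])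
  have finXA: "finite XA" using finBA XA_def by simp
  have finYA: "finite YA" by (rule finiteI_independent[OF YA2])
  have YAZ: "YA \<subseteq> Z \<inter> A" using YA1 PXZA by blast
  have c1: "card YA = dim (Z \<inter> A)" by (rule basis_card_eq_dim[OF YAZ ZAY YA2])
  have c2: "card WA = dim (Z \<inter> A)" by (rule basis_card_eq_dim[OF WA1 WA3 WA2])
  have c3: "card BA = dim A" by (rule basis_card_eq_dim[OF BA2 BA4 BA3])
  have "BA = XA \<union> WA" "XA \<inter> WA = {}" using BA1 XA_def by blast+
  then have c4: "card BA = card XA + card WA"
    using finBA card_Un_disjoint[of XA WA] finite_subset[OF BA1 finBA] finXA by simp
  show ?thesis
  proof (rule that)
    show "XA \<subseteq> A" by (rule XAA)
    show "YA \<subseteq> lie_center br \<inter> A" using YAZ Z_def by simp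
    show "XA \<inter> lie_center br = {}" using XZ Z_def by simp
    show "XA \<noteq> {}" by (rule XAne)
    show "A \<subseteq> span (XA \<union> YA)" by (rule Asp)
    show "lie_center br \<inter> A \<subseteq> span YA" using ZAY Z_def by simp
    show "independent YA" by (rule YA2)
    show "\<exists>u\<in>XA. \<exists>v\<in>XA. y = br u v" if "y \<in> YA" for y
      using that YA1 unfolding PX_def by blast
    show "finite XA" "finite YA" by (rule finXA, rule finYA)
    show "card XA + card YA = dim A" using c1 c2 c3 c4 by simp
  qed
qed

lemma ZBr_lemma:
  assumes ab: "adapted_bases scale br q p x y" and tv: "three_vertex_condition scale br q p x y"
  shows "lie_center br \<subseteq> span {br a b | a b. True}"
proof -
  define Y0 where "Y0 = y ` {..<p}"
  define Br where "Br = {br a b | a b. True}"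
  have injy: "inj_on y {..<p}" and ind: "independent (x ` {..<q} \<union> Y0)"
    and spY: "span Y0 = lie_center br"
    using ab unfolding adapted_bases_def Y0_def by auto
  have indY: "independent Y0" using ind by (rule independent_mono) auto
  have fY: "finite Y0" by (simp add: Y0_def)
  have "y k \<in> span Br" if k: "k < p" for k
  proof -
    obtain i j where i: "i < q" and j: "j < q"
      and S: "{k'. k' < p \<and> bracket_coeff scale br p x y i j k' \<noteq> 0} = {k}"
      using tv k unfolding three_vertex_condition_def by blast
    define c where "c = br (x i) (x j)"
    define r where "r = representation Y0 c"
    have rk: "r (y k') = bracket_coeff scale br p x y i j k'" for k'
      by (simp add: r_def c_def bracket_coeff_def Y0_def)
    have cZ: "c \<in> span Y0" using spY br_center c_def by simp
    have "c = (\<Sum>b\<in>Y0. r b *s b)"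
      unfolding r_def by (rule sum_representation_eq[OF indY cZ fY subset_refl, symmetric])
    also have "\<dots> = (\<Sum>k'\<in>{..<p}. r (y k') *s y k')"
      unfolding Y0_def by (simp add: sum.reindex[OF injy] comp_def)
    also have "\<dots> = r (y k) *s y k + (\<Sum>k'\<in>{..<p} - {k}. r (y k') *s y k')"
      using k by (simp add: sum.remove)
    also have "\<dots> = r (y k) *s y k + 0"
    proof -
      have "(\<Sum>k'\<in>{..<p} - {k}. r (y k') *s y k') = 0"
      proof (rule sum.neutral, rule ballI)
        fix k' assume k': "k' \<in> {..<p} - {k}"
        then have "k' \<notin> {k'. k' < p \<and> bracket_coeff scale br p x y i j k' \<noteq> 0}"
          using S by simp
        then have "r (y k') = 0" using k' rk by simp
        then show "r (y k') *s y k' = 0" by simp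
      qed
      then show ?thesis by simp
    qed
    finally have ceq: "c = r (y k) *s y k" by simp
    have "k \<in> {k'. k' < p \<and> bracket_coeff scale br p x y i j k' \<noteq> 0}" using S by simp
    then have rnz: "r (y k) \<noteq> 0" using rk by simp
    have "inverse (r (y k)) *s c = (inverse (r (y k)) * r (y k)) *s y k" by (simp add: ceq)
    also have "\<dots> = y k" using rnz by simp
    finally have "inverse (r (y k)) *s c = y k" .
    moreover have "c \<in> span Br" unfolding Br_def c_def by (intro span_base) blast
    ultimately show ?thesis using span_scale by metis
  qed
  then have "Y0 \<subseteq> span Br" unfolding Y0_def by blast
  then have "span Y0 \<subseteq> span Br" by (rule span_minimal[OF _ subspace_span])
  then show ?thesis using spY Br_def by simp
qed

lemma forward:
  assumes ab: "adapted_bases scale br q p x y" and tv: "three_vertex_condition scale br q p x y"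
    and dc: "decomposable scale br"
  shows "\<exists>x' y'. adapted_bases scale br q p x' y' \<and> three_vertex_condition scale br q p x' y' \<and>
       \<not> hypergraph_connected (gen_vertices q p) (gen_hyperedges scale br q p x' y')"
proof -
  define Y0 where "Y0 = y ` {..<p}"
  define X0 where "X0 = x ` {..<q}"
  define Z where "Z = lie_center br"
  have injx: "inj_on x {..<q}" and injy: "inj_on y {..<p}" and disj: "X0 \<inter> Y0 = {}"
    and ind: "independent (X0 \<union> Y0)" and spU: "span (X0 \<union> Y0) = UNIV"
    and spY: "span Y0 = Z"
    using ab unfolding adapted_bases_def X0_def Y0_def Z_def by auto
  have indY: "independent Y0" using ind by (rule independent_mono) auto
  have ZBr: "lie_center br \<subseteq> span {br a b | a b. True}" by (rule ZBr_lemma[OF ab tv])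
  obtain A B where A: "lie_ideal scale br A" and B: "lie_ideal scale br B"
    and Ane: "A \<noteq> {0}" and Bne: "B \<noteq> {0}" and AB: "A \<inter> B = {0}"
    and sumAB: "{a + b | a b. a \<in> A \<and> b \<in> B} = UNIV"
    using dc unfolding decomposable_def by blast
  have decA: "\<exists>a\<in>A. \<exists>b\<in>B. v = a + b" for v
  proof -
    have "v \<in> {a + b | a b. a \<in> A \<and> b \<in> B}" using sumAB by simp
    then show ?thesis by blast
  qed
  have decB: "\<exists>b\<in>B. \<exists>a\<in>A. v = b + a" for v
  proof -
    obtain a b where "a \<in> A" "b \<in> B" "v = a + b" using decA[of v] by blast
    then show ?thesis by (intro bexI[of _ b] bexI[of _ a]) (simp_all add: add.commute)
  qed
  have BA: "B \<inter> A = {0}" using AB by blast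
  have subA: "subspace A" by (rule ideal_subspace[OF A])
  have subB: "subspace B" by (rule ideal_subspace[OF B])
  have subZ: "subspace Z" unfolding Z_def by (rule subspace_center)
  have "\<exists>XA YA. XA \<subseteq> A \<and> YA \<subseteq> Z \<inter> A \<and> XA \<inter> Z = {} \<and> XA \<noteq> {} \<and>
      A \<subseteq> span (XA \<union> YA) \<and> Z \<inter> A \<subseteq> span YA \<and> independent YA \<and>
      (\<forall>y\<in>YA. \<exists>u\<in>XA. \<exists>v\<in>XA. y = br u v) \<and> finite XA \<and> finite YA \<and> card XA + card YA = dim A"
  proof (rule side[OF A B AB decA ZBr Ane])
    fix XA YA
    assume h: "XA \<subseteq> A" "YA \<subseteq> lie_center br \<inter> A" "XA \<inter> lie_center br = {}" "XA \<noteq> {}"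
      "A \<subseteq> span (XA \<union> YA)" "lie_center br \<inter> A \<subseteq> span YA" "independent YA"
      "\<And>y. y \<in> YA \<Longrightarrow> \<exists>u\<in>XA. \<exists>v\<in>XA. y = br u v"
      "finite XA" "finite YA" "card XA + card YA = dim A"
    show ?thesis
      by (intro exI[of _ XA] exI[of _ YA] conjI ballI) (use h in \<open>simp_all add: Z_def\<close>)
  qed
  then obtain XA YA where XA1: "XA \<subseteq> A" and YA1: "YA \<subseteq> Z \<inter> A" and XA2: "XA \<inter> Z = {}"
    and XA3: "XA \<noteq> {}" and XA4: "A \<subseteq> span (XA \<union> YA)" and YA2: "Z \<inter> A \<subseteq> span YA"
    and YA3: "independent YA" and YA4: "\<forall>y\<in>YA. \<exists>u\<in>XA. \<exists>v\<in>XA. y = br u v"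
    and XA5: "finite XA" and YA5: "finite YA" and cA: "card XA + card YA = dim A"
    by blast
  have "\<exists>XB YB. XB \<subseteq> B \<and> YB \<subseteq> Z \<inter> B \<and> XB \<inter> Z = {} \<and> XB \<noteq> {} \<and>
      B \<subseteq> span (XB \<union> YB) \<and> Z \<inter> B \<subseteq> span YB \<and> independent YB \<and>
      (\<forall>y\<in>YB. \<exists>u\<in>XB. \<exists>v\<in>XB. y = br u v) \<and> finite XB \<and> finite YB \<and> card XB + card YB = dim B"
  proof (rule side[OF B A BA decB ZBr Bne])
    fix XB YB
    assume h: "XB \<subseteq> B" "YB \<subseteq> lie_center br \<inter> B" "XB \<inter> lie_center br = {}" "XB \<noteq> {}"
      "B \<subseteq> span (XB \<union> YB)" "lie_center br \<inter> B \<subseteq> span YB" "independent YB"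
      "\<And>y. y \<in> YB \<Longrightarrow> \<exists>u\<in>XB. \<exists>v\<in>XB. y = br u v"
      "finite XB" "finite YB" "card XB + card YB = dim B"
    show ?thesis
      by (intro exI[of _ XB] exI[of _ YB] conjI ballI) (use h in \<open>simp_all add: Z_def\<close>)
  qed
  then obtain XB YB where XB1: "XB \<subseteq> B" and YB1: "YB \<subseteq> Z \<inter> B" and XB2: "XB \<inter> Z = {}"
    and XB3: "XB \<noteq> {}" and XB4: "B \<subseteq> span (XB \<union> YB)" and YB2: "Z \<inter> B \<subseteq> span YB"
    and YB3: "independent YB" and YB4: "\<forall>y\<in>YB. \<exists>u\<in>XB. \<exists>v\<in>XB. y = br u v"
    and XB5: "finite XB" and YB5: "finite YB" and cB: "card XB + card YB = dim B"
    by blast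
  define X' where "X' = XA \<union> XB"
  define Y' where "Y' = YA \<union> YB"
  define All where "All = X' \<union> Y'"
  have spAll: "span All = UNIV"
  proof -
    have "v \<in> span All" for v
    proof -
      obtain a b where a: "a \<in> A" and b: "b \<in> B" and v: "v = a + b" using decA by blast
      have "a \<in> span All" using a XA4 span_mono[of "XA \<union> YA" All] unfolding All_def X'_def Y'_def by blast
      moreover have "b \<in> span All" using b XB4 span_mono[of "XB \<union> YB" All] unfolding All_def X'_def Y'_def by blast
      ultimately show ?thesis using v span_add by simp
    qed
    then show ?thesis by blast
  qed
  have finAll: "finite All" unfolding All_def X'_def Y'_def using XA5 YA5 XB5 YB5 by simp
  have fin0: "finite X0" "finite Y0" by (simp_all add: X0_def Y0_def)
  have cX0: "card X0 = q" unfolding X0_def using card_image[OF injx] by simp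
  have cY0: "card Y0 = p" unfolding Y0_def using card_image[OF injy] by simp
  have dimU: "dim (UNIV :: 'v set) = q + p"
  proof -
    have "card (X0 \<union> Y0) = dim (UNIV :: 'v set)"
      by (rule basis_card_eq_dim) (use ind spU in auto)
    moreover have "card (X0 \<union> Y0) = q + p"
      using card_Un_disjoint[OF fin0 disj] cX0 cY0 by simp
    ultimately show ?thesis by simp
  qed
  have dimAB: "dim A + dim B = q + p"
  proof -
    have "dim {a + b | a b. a \<in> A \<and> b \<in> B} + dim (A \<inter> B) = dim A + dim B"
      by (rule dim_sums_Int[OF subA subB])
    then show ?thesis using sumAB AB dimU by simp
  qed
  have "card All \<le> card X' + card Y'" unfolding All_def by (rule card_Un_le)
  also have "\<dots> \<le> (card XA + card XB) + (card YA + card YB)"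
    unfolding X'_def Y'_def by (intro add_mono card_Un_le)
  also have "\<dots> = q + p" using cA cB dimAB by simp
  finally have cAll: "card All \<le> dim (UNIV :: 'v set)" using dimU by simp
  have indAll: "independent All"
    by (rule card_le_dim_spanning[OF subset_UNIV _ finAll cAll]) (simp add: spAll)
  have Y'Z: "Y' \<subseteq> Z" unfolding Y'_def using YA1 YB1 by blast
  have spY': "span Y' = Z"
  proof
    show "span Y' \<subseteq> Z" by (rule span_minimal[OF Y'Z subZ])
    show "Z \<subseteq> span Y'"
    proof
      fix z assume z: "z \<in> Z"
      obtain a b where a: "a \<in> A" and b: "b \<in> B" and v: "z = a + b" using decA by blast
      have "a \<in> lie_center br" by (rule zsplit[OF A B AB decA _ v a b]) (use z in \<open>simp add: Z_def\<close>)
      then have "a \<in> span Y'" using a YA2 span_mono[of YA Y'] unfolding Y'_def Z_def by blast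
      moreover have zba: "z = b + a" using v by (simp add: add.commute)
      have "b \<in> lie_center br" by (rule zsplit[OF B A BA decB _ zba b a]) (use z in \<open>simp add: Z_def\<close>)
      then have "b \<in> span Y'" using b YB2 span_mono[of YB Y'] unfolding Y'_def Z_def by blast
      ultimately show "z \<in> span Y'" using v span_add by simp
    qed
  qed
  have indY': "independent Y'" using indAll unfolding All_def by (rule independent_mono) auto
  have dXY: "X' \<inter> Y' = {}" using XA2 XB2 Y'Z unfolding X'_def by blast
  have cY': "card Y' = p"
  proof -
    have "card Y' = dim Z" by (rule basis_card_eq_dim[OF Y'Z _ indY']) (simp add: spY')
    also have "\<dots> = dim Y0" using spY dim_span[of Y0] by simp
    also have "\<dots> = p" using dim_eq_card_independent[OF indY] cY0 by simp
    finally show ?thesis .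
  qed
  have cAll2: "card All = q + p"
    using basis_card_eq_dim[OF subset_UNIV _ indAll] spAll dimU by simp
  have finX': "finite X'" "finite Y'" using finAll unfolding All_def by auto
  have cX': "card X' = q"
    using card_Un_disjoint[OF finX' dXY] cAll2 cY' unfolding All_def by simp
  obtain x' where bx: "bij_betw x' {..<q} X'"
    using ex_bij_betw_nat_finite[OF finX'(1)] cX' by (metis atLeast0LessThan)
  obtain y' where by': "bij_betw y' {..<p} Y'"
    using ex_bij_betw_nat_finite[OF finX'(2)] cY' by (metis atLeast0LessThan)
  have ix: "x' ` {..<q} = X'" and iy: "y' ` {..<p} = Y'"
    using bx by' by (simp_all add: bij_betw_def)
  have injx': "inj_on x' {..<q}" and injy': "inj_on y' {..<p}"
    using bx by' by (simp_all add: bij_betw_def)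
  have ab': "adapted_bases scale br q p x' y'"
    unfolding adapted_bases_def ix iy
    using injx' injy' dXY indAll spAll spY' unfolding All_def Z_def by simp
  have bc: "bracket_coeff scale br p x' y' i j k' = representation Y' (br (x' i) (x' j)) (y' k')"
    for i j k' by (simp add: bracket_coeff_def iy)
  have tv': "three_vertex_condition scale br q p x' y'"
    unfolding three_vertex_condition_def
  proof (intro allI impI)
    fix k assume k: "k < p"
    then have "y' k \<in> Y'" using iy by blast
    then obtain u v where u: "u \<in> X'" and v: "v \<in> X'" and uv: "y' k = br u v"
      using YA4 YB4 unfolding Y'_def X'_def by blast
    obtain i where i: "i < q" "u = x' i" using u ix by blast
    obtain j where j: "j < q" "v = x' j" using v ix by blast
    have rep: "representation Y' (y' k) = (\<lambda>w. if w = y' k then 1 else 0)"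
      by (rule representation_basis[OF indY' \<open>y' k \<in> Y'\<close>])
    have "{k'. k' < p \<and> bracket_coeff scale br p x' y' i j k' \<noteq> 0} = {k}"
    proof -
      have e1: "br (x' i) (x' j) = y' k" using uv i j by simp
      have "bracket_coeff scale br p x' y' i j k' = (if y' k' = y' k then 1 else 0)" for k'
        unfolding bc e1 rep by simp
      then show ?thesis using k injy' by (auto simp: inj_on_def)
    qed
    then show "\<exists>i<q. \<exists>j<q. {k'. k' < p \<and> bracket_coeff scale br p x' y' i j k' \<noteq> 0} = {k}"
      using i j by blast
  qed
  define V where "V = gen_vertices q p"
  define E where "E = gen_hyperedges scale br q p x' y'"
  define R where "R = {(a, b). \<exists>e\<in>E. a \<in> e \<and> b \<in> e}"
  define f where "f = vf x' y'"
  have fAll: "f v \<in> All" if v: "v \<in> V" for v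
  proof (cases v)
    case (Inl i)
    then have "i < q" using v by (auto simp: V_def gen_vertices_def)
    then have "x' i \<in> X'" using ix by blast
    then show ?thesis using Inl by (simp add: f_def All_def)
  next
    case (Inr k)
    then have "k < p" using v by (auto simp: V_def gen_vertices_def)
    then have "y' k \<in> Y'" using iy by blast
    then show ?thesis using Inr by (simp add: f_def All_def)
  qed
  have nz: "f v \<noteq> 0" if "v \<in> V" for v
  proof
    assume "f v = 0"
    then have "dependent All" using fAll[OF that] dependent_zero by metis
    then show False using indAll by blast
  qed
  have fAB: "f v \<in> A \<or> f v \<in> B" if "v \<in> V" for v
    using fAll[OF that] XA1 XB1 YA1 YB1 unfolding All_def X'_def Y'_def by blast
  have EV: "e \<subseteq> V" if "e \<in> E" for e
    using that unfolding E_def V_def gen_hyperedges_def gen_vertices_def by auto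
  have same: "\<forall>w\<in>e. f w \<in> J"
    if J: "lie_ideal scale br J" and YJ: "YJ \<subseteq> Y'" "YJ \<subseteq> J" "Z \<inter> J \<subseteq> span YJ"
      and i: "i < q" and j: "j < q" and xi: "x' i \<in> J" and xj: "x' j \<in> J"
      and e: "e = {Inl i, Inl j} \<union> Inr ` {k. k < p \<and> bracket_coeff scale br p x' y' i j k \<noteq> 0}"
    for J YJ i j e
  proof
    fix w assume w: "w \<in> e"
    define c where "c = br (x' i) (x' j)"
    have "c \<in> J" unfolding c_def by (rule ideal_r[OF J xj])
    moreover have "c \<in> Z" unfolding c_def Z_def by (rule br_center)
    ultimately have cY: "c \<in> span YJ" using YJ(3) by blast
    have repeq: "representation Y' c = representation YJ c"
      by (rule representation_extend[OF indY' cY YJ(1)])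
    show "f w \<in> J"
    proof (cases "w \<in> {Inl i, Inl j}")
      case True then show ?thesis using xi xj by (auto simp: f_def)
    next
      case False
      have "w \<in> Inr ` {k. k < p \<and> bracket_coeff scale br p x' y' i j k \<noteq> 0}"
        using w False unfolding e by blast
      then obtain k where k: "k < p" and bk: "bracket_coeff scale br p x' y' i j k \<noteq> 0"
        and wk: "w = Inr k" by blast
      have "representation YJ c (y' k) \<noteq> 0" using bk bc repeq by (simp add: c_def)
      then have "y' k \<in> YJ" by (rule representation_ne_zero)
      then show ?thesis using YJ(2) wk by (auto simp: f_def)
    qed
  qed
  have edge: "(\<forall>w\<in>e. f w \<in> A) \<or> (\<forall>w\<in>e. f w \<in> B)" if e: "e \<in> E" for e
  proof -
    obtain i j where i: "i < q" and j: "j < q" and ex: "\<exists>k<p. bracket_coeff scale br p x' y' i j k \<noteq> 0"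
      and eeq: "e = {Inl i, Inl j} \<union> Inr ` {k. k < p \<and> bracket_coeff scale br p x' y' i j k \<noteq> 0}"
      using e unfolding E_def gen_hyperedges_def by (auto simp only: mem_Collect_eq)
    have nz0: "br (x' i) (x' j) \<noteq> 0"
    proof
      assume "br (x' i) (x' j) = 0"
      then have "bracket_coeff scale br p x' y' i j k = 0" for k
        using bc representation_zero by simp
      then show False using ex by blast
    qed
    have iV: "Inl i \<in> V" and jV: "Inl j \<in> V" using i j by (auto simp: V_def gen_vertices_def)
    have YAY: "YA \<subseteq> Y'" and YBY: "YB \<subseteq> Y'" unfolding Y'_def by auto
    have YAA: "YA \<subseteq> A" using YA1 by blast
    have YBB: "YB \<subseteq> B" using YB1 by blast
    have YA2': "Z \<inter> A \<subseteq> span YA" by (rule YA2)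
    have YB2': "Z \<inter> B \<subseteq> span YB" by (rule YB2)
    consider "x' i \<in> A" "x' j \<in> A" | "x' i \<in> B" "x' j \<in> B" | "x' i \<in> A" "x' j \<in> B" | "x' i \<in> B" "x' j \<in> A"
      using fAB[OF iV] fAB[OF jV] by (auto simp: f_def)
    then show ?thesis
    proof cases
      case 1 then show ?thesis using same[OF A YAY YAA YA2' i j _ _ eeq] by blast
    next
      case 2 then show ?thesis using same[OF B YBY YBB YB2' i j _ _ eeq] by blast
    next
      case 3
      have "br (x' i) (x' j) = 0" by (rule cross[OF A B AB 3])
      then show ?thesis using nz0 by simp
    next
      case 4
      have "br (x' j) (x' i) = 0" by (rule cross[OF A B AB 4(2) 4(1)])
      then have "br (x' i) (x' j) = 0" using anti[of "x' i" "x' j"] by simp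
      then show ?thesis using nz0 by simp
    qed
  qed
  have stepA: "f b \<in> A" if ab: "(a, b) \<in> R" and fa: "f a \<in> A" for a b
  proof -
    obtain e where e: "e \<in> E" and ae: "a \<in> e" and be: "b \<in> e" using ab unfolding R_def by blast
    show ?thesis
    proof (cases "\<forall>w\<in>e. f w \<in> A")
      case True then show ?thesis using be by blast
    next
      case False
      then have "\<forall>w\<in>e. f w \<in> B" using edge[OF e] by blast
      then have "f a \<in> A \<inter> B" using fa ae by blast
      then have "f a = 0" using AB by blast
      moreover have "a \<in> V" using EV[OF e] ae by blast
      ultimately show ?thesis using nz by blast
    qed
  qed
  obtain u where u: "u \<in> XA" using XA3 by blast
  then have "u \<in> X'" by (simp add: X'_def)
  then obtain i0 where i0: "i0 < q" "u = x' i0" using ix by blast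
  obtain w where w: "w \<in> XB" using XB3 by blast
  then have "w \<in> X'" by (simp add: X'_def)
  then obtain j0 where j0: "j0 < q" "w = x' j0" using ix by blast
  have nc: "\<not> hypergraph_connected V E"
  proof
    assume conn: "hypergraph_connected V E"
    have all: "\<forall>u\<in>V. \<forall>w\<in>V. (u, w) \<in> R\<^sup>*"
      using conn unfolding hypergraph_connected_def R_def .
    have "Inl i0 \<in> V" "Inl j0 \<in> V" using i0 j0 by (auto simp: V_def gen_vertices_def)
    then have rt: "(Inl i0, Inl j0) \<in> R\<^sup>*" using all by blast
    have "f (Inl i0) \<in> A" using i0 u XA1 by (auto simp: f_def)
    have "f v \<in> A" if "(Inl i0, v) \<in> R\<^sup>*" for v
      using that
    proof (induction rule: rtrancl_induct)
      case base then show ?case by fact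
    next
      case (step b c) then show ?case using stepA by blast
    qed
    from this[OF rt] have "w \<in> A" using j0 by (simp add: f_def)
    moreover have "w \<in> B" using w XB1 by blast
    ultimately have "w = 0" using AB by blast
    moreover have "f (Inl j0) \<noteq> 0" by (rule nz) (use j0 in \<open>auto simp: V_def gen_vertices_def\<close>)
    ultimately show False using j0 by (simp add: f_def)
  qed
  have nc': "\<not> hypergraph_connected (gen_vertices q p) (gen_hyperedges scale br q p x' y')"
    using nc unfolding V_def E_def .
  show ?thesis by (intro exI[of _ x'] exI[of _ y'] conjI ab' tv' nc')
qed

end

theorem proposition3:
  fixes s :: "complex \<Rightarrow> 'v::ab_group_add \<Rightarrow> 'v"
    and br :: "'v \<Rightarrow> 'v \<Rightarrow> 'v"
    and q p :: nat
    and x y :: "nat \<Rightarrow> 'v"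
  assumes "lie_algebra s br"
    and "two_step_nilpotent br"
    and "q \<ge> 2" and "p \<ge> 2"
    and "adapted_bases s br q p x y"
    and "three_vertex_condition s br q p x y"
  shows "decomposable s br \<longleftrightarrow>
    (\<exists>x' y'. adapted_bases s br q p x' y' \<and> three_vertex_condition s br q p x' y' \<and>
       \<not> hypergraph_connected (gen_vertices q p) (gen_hyperedges s br q p x' y'))"
proof -
  have vs: "vector_space s" using assms(1) by (simp add: lie_algebra_def)
  have "twostep s (x ` {..<q} \<union> y ` {..<p}) br"
    unfolding twostep_def twostep_axioms_def finite_dimensional_vector_space_def
      finite_dimensional_vector_space_axioms_def
    using vs assms(1,2,5) by (simp add: lie_algebra_def two_step_nilpotent_def adapted_bases_def)
  then interpret T: twostep s "x ` {..<q} \<union> y ` {..<p}" br .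
  show ?thesis
  proof
    assume "decomposable s br"
    then show "\<exists>x' y'. adapted_bases s br q p x' y' \<and> three_vertex_condition s br q p x' y' \<and>
       \<not> hypergraph_connected (gen_vertices q p) (gen_hyperedges s br q p x' y')"
      by (rule T.forward[OF assms(5) assms(6)])
  next
    assume "\<exists>x' y'. adapted_bases s br q p x' y' \<and> three_vertex_condition s br q p x' y' \<and>
       \<not> hypergraph_connected (gen_vertices q p) (gen_hyperedges s br q p x' y')"
    then obtain x' y' where "adapted_bases s br q p x' y'"
      and "\<not> hypergraph_connected (gen_vertices q p) (gen_hyperedges s br q p x' y')" by blast
    then show "decomposable s br" by (rule T.backward)
  qed
qed

end
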